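(* Let $n=p_1^{\alpha_1}p_2^{\alpha_2}p_3^{\alpha_3}$ where $p_1,p_2,p_3$ are distinct primes and $\alpha_i\geq 1$ are integers, and suppose $\alpha_i>1$ for at least two indices $i\in\{1,2,3\}$. Then $\mathbb{AG}(\mathbb{Z}_n)$ is not perfect.
   Context: For a commutative ring $R$ with unity, the annihilating-ideal graph $\mathbb{AG}(R)$ is the simple graph whose vertex set is the set of all non-zero ideals of $R$ with non-zero annihilator, two distinct vertices $I,J$ being adjacent if and only if $IJ=0$. A graph $G$ is perfect if $\omega(H)=\chi(H)$ for every induced subgraph $H$ of $G$. *)

theory Defs
  imports "HOL-Algebra.Ideal_Product" "HOL-Number_Theory.Residues"
begin

text \<open>A simple graph is given by a vertex set V and a symmetric irreflexive adjacency
  relation E (only its restriction to V matters).  Induced subgraph on H is (H, E).\<close>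

definition is_clique :: "'v set \<Rightarrow> ('v \<Rightarrow> 'v \<Rightarrow> bool) \<Rightarrow> 'v set \<Rightarrow> bool" where
  "is_clique V E C \<longleftrightarrow> C \<subseteq> V \<and> (\<forall>x\<in>C. \<forall>y\<in>C. x \<noteq> y \<longrightarrow> E x y)"

definition clique_number :: "'v set \<Rightarrow> ('v \<Rightarrow> 'v \<Rightarrow> bool) \<Rightarrow> nat" where
  "clique_number V E = Max {card C | C. is_clique V E C}"

definition is_colouring :: "'v set \<Rightarrow> ('v \<Rightarrow> 'v \<Rightarrow> bool) \<Rightarrow> nat \<Rightarrow> ('v \<Rightarrow> nat) \<Rightarrow> bool" where
  "is_colouring V E k f \<longleftrightarrow> (\<forall>x\<in>V. f x < k) \<and> (\<forall>x\<in>V. \<forall>y\<in>V. x \<noteq> y \<longrightarrow> E x y \<longrightarrow> f x \<noteq> f y)"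

definition chromatic_number :: "'v set \<Rightarrow> ('v \<Rightarrow> 'v \<Rightarrow> bool) \<Rightarrow> nat" where
  "chromatic_number V E = (LEAST k. \<exists>f. is_colouring V E k f)"

definition perfect_graph :: "'v set \<Rightarrow> ('v \<Rightarrow> 'v \<Rightarrow> bool) \<Rightarrow> bool" where
  "perfect_graph V E \<longleftrightarrow> (\<forall>H\<subseteq>V. clique_number H E = chromatic_number H E)"

definition ann_ideal :: "('a, 'b) ring_scheme \<Rightarrow> 'a set \<Rightarrow> 'a set" where
  "ann_ideal R I = {x \<in> carrier R. \<forall>i\<in>I. x \<otimes>\<^bsub>R\<^esub> i = \<zero>\<^bsub>R\<^esub>}"

definition AG_vertices :: "('a, 'b) ring_scheme \<Rightarrow> 'a set set" where
  "AG_vertices R = {I. ideal I R \<and> I \<noteq> {\<zero>\<^bsub>R\<^esub>} \<and> ann_ideal R I \<noteq> {\<zero>\<^bsub>R\<^esub>}}"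

definition AG_adj :: "('a, 'b) ring_scheme \<Rightarrow> 'a set \<Rightarrow> 'a set \<Rightarrow> bool" where
  "AG_adj R I J \<longleftrightarrow> I \<noteq> J \<and> ideal_prod R I J = {\<zero>\<^bsub>R\<^esub>}"

end

theory Submission
  imports Defs
begin

lemma exps:
  fixes p q r :: nat
  assumes "prime p" "prime q" "prime r" "p \<noteq> q" "p \<noteq> r" "q \<noteq> r"
  shows "p^a*q^b*r^c dvd p^x*q^y*r^z \<longleftrightarrow> a \<le> x \<and> b \<le> y \<and> c \<le> z"
proof
  have p2: "2 \<le> p" "2 \<le> q" "2 \<le> r" using assms prime_ge_2_nat by auto
  have cpq: "coprime p q" "coprime p r" "coprime q r"
    using assms primes_coprime by auto
  assume h: "p^a*q^b*r^c dvd p^x*q^y*r^z"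
  have "p^a dvd p^x*(q^y*r^z)" using h by (metis dvd_mult_left mult.assoc)
  moreover have "coprime (p^a) (q^y*r^z)" using cpq by simp
  ultimately have "p^a dvd p^x" using coprime_dvd_mult_left_iff by blast
  hence 1: "a \<le> x" using dvd_power_iff_le p2 by blast
  have "q^b dvd q^y*(p^x*r^z)" using h
    by (metis (no_types, lifting) dvd_mult_left dvd_mult_right mult.assoc mult.commute)
  moreover have "coprime (q^b) (p^x*r^z)" using cpq by (simp add: coprime_commute)
  ultimately have "q^b dvd q^y" using coprime_dvd_mult_left_iff by blast
  hence 2: "b \<le> y" using dvd_power_iff_le p2 by blast
  have "r^c dvd r^z*(p^x*q^y)" using h
    by (metis dvd_mult_right mult.commute)
  moreover have "coprime (r^c) (p^x*q^y)" using cpq by (simp add: coprime_commute)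
  ultimately have "r^c dvd r^z" using coprime_dvd_mult_left_iff by blast
  hence 3: "c \<le> z" using dvd_power_iff_le p2 by blast
  show "a \<le> x \<and> b \<le> y \<and> c \<le> z" using 1 2 3 by simp
next
  assume "a \<le> x \<and> b \<le> y \<and> c \<le> z"
  thus "p^a*q^b*r^c dvd p^x*q^y*r^z"
    by (simp add: le_imp_power_dvd mult_dvd_mono)
qed

lemma prod3: "(p^x*q^y*r^z)*(p^x'*q^y'*r^z') = (p^(x+x')*q^(y+y')*r^(z+z') :: nat)"
  by (simp add: power_add ac_simps)

lemma C5_not_perfect:
  assumes V: "{v1,v2,v3,v4,v5} \<subseteq> V"
    and d: "v1 \<noteq> v2" "v1 \<noteq> v3" "v1 \<noteq> v4" "v1 \<noteq> v5" "v2 \<noteq> v3"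
      "v2 \<noteq> v4" "v2 \<noteq> v5" "v3 \<noteq> v4" "v3 \<noteq> v5" "v4 \<noteq> v5"
    and e: "E v1 v2" "E v2 v3" "E v3 v4" "E v4 v5" "E v5 v1"
    and n: "\<not> E v1 v3" "\<not> E v1 v4" "\<not> E v2 v4" "\<not> E v2 v5" "\<not> E v3 v5"
      "\<not> E v3 v1" "\<not> E v4 v1" "\<not> E v4 v2" "\<not> E v5 v2" "\<not> E v5 v3"
  shows "\<not> perfect_graph V E"
proof
  assume pf: "perfect_graph V E"
  define H where "H = {v1,v2,v3,v4,v5}"
  have eq: "clique_number H E = chromatic_number H E"
    using pf V unfolding perfect_graph_def H_def by blast
  have cl: "card C \<le> 2" if "is_clique H E C" for C
  proof -
    have C: "C \<subseteq> H" and adj: "\<And>x y. x \<in> C \<Longrightarrow> y \<in> C \<Longrightarrow> x \<noteq> y \<Longrightarrow> E x y"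
      using that unfolding is_clique_def by auto
    have CH: "C \<subseteq> {v1,v2,v3,v4,v5}" using C unfolding H_def .
    have "\<exists>x y. C \<subseteq> {x, y}"
    proof (cases "v1 \<in> C")
      case c1: True
      have "v3 \<notin> C" using adj[OF c1] n(1) d(2) by blast
      moreover have "v4 \<notin> C" using adj[OF c1] n(2) d(3) by blast
      ultimately have C1: "C \<subseteq> {v1,v2,v5}" using CH by blast
      show ?thesis
      proof (cases "v2 \<in> C")
        case True
        hence "v5 \<notin> C" using adj[OF True] n(4) d(7) by blast
        hence "C \<subseteq> {v1,v2}" using C1 by blast
        thus ?thesis by blast
      next
        case False
        hence "C \<subseteq> {v1,v5}" using C1 by blast
        thus ?thesis by blast
      qed
    next
      case f1: False
      show ?thesis
      proof (cases "v2 \<in> C")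
        case c2: True
        have "v4 \<notin> C" using adj[OF c2] n(3) d(6) by blast
        moreover have "v5 \<notin> C" using adj[OF c2] n(4) d(7) by blast
        ultimately have "C \<subseteq> {v2,v3}" using CH f1 by blast
        thus ?thesis by blast
      next
        case f2: False
        show ?thesis
        proof (cases "v3 \<in> C")
          case c3: True
          have "v5 \<notin> C" using adj[OF c3] n(5) d(9) by blast
          hence "C \<subseteq> {v3,v4}" using CH f1 f2 by blast
          thus ?thesis by blast
        next
          case False
          hence "C \<subseteq> {v4,v5}" using CH f1 f2 by blast
          thus ?thesis by blast
        qed
      qed
    qed
    then obtain x y where "C \<subseteq> {x,y}" by blast
    hence "card C \<le> card {x,y}" by (intro card_mono) auto
    also have "\<dots> \<le> 2" by (simp add: card_insert_le_m1)
    finally show ?thesis .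
  qed
  have fin: "finite {card C | C. is_clique H E C}"
  proof -
    have "{card C | C. is_clique H E C} \<subseteq> {..2}" using cl by auto
    thus ?thesis using finite_subset by blast
  qed
  have ne: "{card C | C. is_clique H E C} \<noteq> {}"
    by (auto simp: is_clique_def)
  have c2: "clique_number H E \<le> 2"
  proof -
    have "k \<le> 2" if k: "k \<in> {card C | C. is_clique H E C}" for k
    proof -
      obtain C where "k = card C" "is_clique H E C" using k by blast
      thus ?thesis using cl by simp
    qed
    thus ?thesis unfolding clique_number_def by (rule Max.boundedI[OF fin ne])
  qed
  define f where "f x = (if x = v1 then 0 else if x = v2 then 1 else if x = v3 then 0
     else if x = v4 then 1 else (2::nat))" for x
  have fv: "f v1 = 0" "f v2 = 1" "f v3 = 0" "f v4 = 1" "f v5 = 2"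
    using d by (auto simp: f_def)
  have ex: "\<exists>f. is_colouring H E 3 f"
  proof
    have "\<forall>x\<in>H. f x < 3" unfolding H_def using fv by auto
    moreover have "f x \<noteq> f y" if "x \<in> H" "y \<in> H" "x \<noteq> y" "E x y" for x y
      using that fv n unfolding H_def by auto
    ultimately show "is_colouring H E 3 f" unfolding is_colouring_def by blast
  qed
  have c3: "chromatic_number H E \<ge> 3"
  proof -
    let ?k = "chromatic_number H E"
    have "\<exists>f. is_colouring H E ?k f" unfolding chromatic_number_def
      by (rule LeastI[of "\<lambda>k. \<exists>f. is_colouring H E k f" 3, OF ex])
    then obtain g where g: "is_colouring H E ?k g" by blast
    show ?thesis
    proof (rule ccontr)
      assume "\<not> 3 \<le> ?k"
      hence lt2: "\<forall>x\<in>H. g x < 2" using g unfolding is_colouring_def by auto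
      have g1: "\<And>x y. x \<in> H \<Longrightarrow> y \<in> H \<Longrightarrow> x \<noteq> y \<Longrightarrow> E x y \<Longrightarrow> g x \<noteq> g y"
        using g unfolding is_colouring_def by blast
      have inH: "v1 \<in> H" "v2 \<in> H" "v3 \<in> H" "v4 \<in> H" "v5 \<in> H" unfolding H_def by simp_all
      hence "g v1 < 2" "g v2 < 2" "g v3 < 2" "g v4 < 2" "g v5 < 2" using lt2 by blast+
      moreover have "g v1 \<noteq> g v2" by (rule g1[OF inH(1) inH(2) d(1) e(1)])
      moreover have "g v2 \<noteq> g v3" by (rule g1[OF inH(2) inH(3) d(5) e(2)])
      moreover have "g v3 \<noteq> g v4" by (rule g1[OF inH(3) inH(4) d(8) e(3)])
      moreover have "g v4 \<noteq> g v5" by (rule g1[OF inH(4) inH(5) d(10) e(4)])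
      moreover have "g v5 \<noteq> g v1" by (rule g1[OF inH(5) inH(1) d(4)[symmetric] e(5)])
      ultimately show False by presburger
    qed
  qed
  show False using eq c2 c3 by simp
qed

definition Jd :: "int \<Rightarrow> int \<Rightarrow> int set" where
  "Jd m d = {x \<in> {0..m-1}. d dvd x}"

lemma cring_res: "m > 1 \<Longrightarrow> cring (residue_ring m)"
  using residues.cring[of m] unfolding residues_def by simp

lemma Jd_PIdl:
  assumes "m > 1" "d > 0" "d dvd m"
  shows "Jd m d = PIdl\<^bsub>residue_ring m\<^esub> d"
proof
  show "Jd m d \<subseteq> PIdl\<^bsub>residue_ring m\<^esub> d"
  proof
    fix x assume x: "x \<in> Jd m d"
    hence "d dvd x" unfolding Jd_def by simp
    then obtain k where "x = d * k" by (rule dvdE)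
    hence k: "x = k * d" by (simp add: mult.commute)
    have "0 \<le> k" using x k assms(2) unfolding Jd_def
      by (simp add: zero_le_mult_iff)
    moreover have "k \<le> x" using k assms(2) \<open>0 \<le> k\<close>
      by (simp add: mult_le_cancel_left1)
    ultimately have "k \<in> {0..m-1}" using x unfolding Jd_def by auto
    moreover have "x = (k * d) mod m" using x k unfolding Jd_def by auto
    ultimately show "x \<in> PIdl\<^bsub>residue_ring m\<^esub> d"
      unfolding cgenideal_def residue_ring_def by auto
  qed
next
  show "PIdl\<^bsub>residue_ring m\<^esub> d \<subseteq> Jd m d"
  proof
    fix x assume "x \<in> PIdl\<^bsub>residue_ring m\<^esub> d"
    then obtain k where x: "x = (k * d) mod m"
      unfolding cgenideal_def residue_ring_def by auto
    have "d dvd x" unfolding x using assms(3) by (simp add: dvd_mod)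
    moreover have "x \<in> {0..m-1}" unfolding x using assms(1) by simp
    ultimately show "x \<in> Jd m d" unfolding Jd_def by simp
  qed
qed

lemma Jd_ideal:
  assumes "m > 1" "d > 0" "d dvd m" "d \<noteq> m"
  shows "ideal (Jd m d) (residue_ring m)"
proof -
  have "d \<in> carrier (residue_ring m)"
    using assms zdvd_imp_le[of d m] unfolding residue_ring_def by auto
  show ?thesis unfolding Jd_PIdl[OF assms(1-3)]
    using cring.cgenideal_ideal[OF cring_res[OF assms(1)]] \<open>d \<in> carrier _\<close> by blast
qed

lemma Jd_self:
  assumes "m > 1" "d > 0" "d dvd m" "d \<noteq> m"
  shows "d \<in> Jd m d"
  using assms zdvd_imp_le[of d m] unfolding Jd_def by auto

lemma Jd_vertex:
  assumes "m > 1" "d > 1" "d dvd m" "d \<noteq> m"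
  shows "Jd m d \<in> AG_vertices (residue_ring m)"
proof -
  have i: "ideal (Jd m d) (residue_ring m)" using Jd_ideal assms by simp
  have "d \<in> Jd m d" using Jd_self assms by simp
  hence nz: "Jd m d \<noteq> {0}" using assms by auto
  obtain k where k: "m = d * k" using assms(3) by (auto elim: dvdE)
  have kpos: "k > 0"
  proof (rule ccontr)
    assume "\<not> k > 0"
    hence "k \<le> 0" by simp
    hence "d * k \<le> 0" using assms(2) by (simp add: mult_nonneg_nonpos)
    thus False using k assms(1) by simp
  qed
  have "k < m" using k assms kpos by simp
  have "k \<in> ann_ideal (residue_ring m) (Jd m d)"
    unfolding ann_ideal_def
  proof (intro CollectI conjI ballI)
    show "k \<in> carrier (residue_ring m)" using kpos \<open>k < m\<close> by (simp add: residue_ring_def)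
    fix i assume "i \<in> Jd m d"
    hence "d dvd i" unfolding Jd_def by simp
    then obtain j where "i = d * j" by (auto elim: dvdE)
    hence "k * i = m * j" using k by (simp add: ac_simps)
    thus "k \<otimes>\<^bsub>residue_ring m\<^esub> i = \<zero>\<^bsub>residue_ring m\<^esub>" by (simp add: residue_ring_def)
  qed
  hence "ann_ideal (residue_ring m) (Jd m d) \<noteq> {0}" using kpos by auto
  moreover have "\<zero>\<^bsub>residue_ring m\<^esub> = 0" by (simp add: residue_ring_def)
  ultimately show ?thesis using i nz unfolding AG_vertices_def by simp
qed

lemma Jd_prod:
  assumes "m > 1" "d > 0" "d dvd m" "d \<noteq> m" "e > 0" "e dvd m" "e \<noteq> m"
  shows "ideal_prod (residue_ring m) (Jd m d) (Jd m e) = {0} \<longleftrightarrow> m dvd d * e"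
proof
  assume h: "ideal_prod (residue_ring m) (Jd m d) (Jd m e) = {0}"
  have "d \<in> Jd m d" "e \<in> Jd m e" using Jd_self assms by auto
  hence "d \<otimes>\<^bsub>residue_ring m\<^esub> e \<in> ideal_prod (residue_ring m) (Jd m d) (Jd m e)"
    by (rule ideal_prod.prod)
  hence "(d * e) mod m = 0" using h unfolding residue_ring_def by simp
  thus "m dvd d * e" by auto
next
  assume h: "m dvd d * e"
  have "s = 0" if "s \<in> ideal_prod (residue_ring m) (Jd m d) (Jd m e)" for s
    using that
  proof (induct s rule: ideal_prod.induct)
    case (prod i j)
    then have "d dvd i" "e dvd j" unfolding Jd_def by auto
    then have "d * e dvd i * j" by (rule mult_dvd_mono)
    hence "m dvd i * j" using h dvd_trans by blast
    thus ?case by (simp add: residue_ring_def)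
  next
    case (sum s1 s2)
    thus ?case by (simp add: residue_ring_def)
  qed
  moreover have "0 \<in> ideal_prod (residue_ring m) (Jd m d) (Jd m e)"
  proof -
    have "0 \<in> Jd m d" "0 \<in> Jd m e" using assms unfolding Jd_def by auto
    hence "0 \<otimes>\<^bsub>residue_ring m\<^esub> 0 \<in> ideal_prod (residue_ring m) (Jd m d) (Jd m e)"
      by (intro ideal_prod.prod)
    thus ?thesis unfolding residue_ring_def by simp
  qed
  ultimately show "ideal_prod (residue_ring m) (Jd m d) (Jd m e) = {0}" by auto
qed

lemma Jd_eq:
  assumes "m > 1" "d > 0" "d dvd m" "d \<noteq> m" "Jd m d = Jd m e"
  shows "e dvd d"
proof -
  have "d \<in> Jd m e" using Jd_self[OF assms(1-4)] assms(5) by simp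
  thus ?thesis unfolding Jd_def by simp
qed

context
  fixes p q r a b c n :: nat
  assumes pr: "prime p" "prime q" "prime r" "p \<noteq> q" "p \<noteq> r" "q \<noteq> r"
    and ex: "a \<ge> 1" "b \<ge> 1" "c \<ge> 1"
    and nd: "n = p^a*q^b*r^c"
begin

lemma n_gt1: "int n > 1"
proof -
  have "p \<ge> 2" using pr prime_ge_2_nat by auto
  hence "p^a \<ge> 2" using ex
    using power_increasing[of 1 a p] by simp
  moreover have "q > 0" "r > 0" using pr prime_gt_0_nat by auto
  hence "q^b \<ge> 1" "r^c \<ge> 1" by simp_all
  ultimately have "p^a*q^b*r^c \<ge> 2 * 1 * 1" by (intro mult_le_mono) auto
  hence "n \<ge> 2" using nd by simp
  thus ?thesis by simp
qed

lemma Dpos: "p^x*q^y*r^z > 0"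
  using pr prime_gt_0_nat by auto

lemma vert:
  assumes "x \<le> a" "y \<le> b" "z \<le> c" "\<not> (a \<le> x \<and> b \<le> y \<and> c \<le> z)" "0 < x + y + z"
  shows "Jd (int n) (int (p^x*q^y*r^z)) \<in> AG_vertices (residue_ring (int n))"
proof (rule Jd_vertex[OF n_gt1])
  have "p^x*q^y*r^z dvd n" unfolding nd by (subst exps[OF pr]; use assms in simp)+
  thus "int (p^x*q^y*r^z) dvd int n" by (simp only: of_nat_dvd_iff)
  have "\<not> n dvd p^x*q^y*r^z" unfolding nd by (subst exps[OF pr]; use assms in simp)+
  show "int (p^x*q^y*r^z) \<noteq> int n"
  proof
    assume "int (p^x*q^y*r^z) = int n"
    hence "p^x*q^y*r^z = n" by (simp only: of_nat_eq_iff)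
    thus False using \<open>\<not> n dvd p^x*q^y*r^z\<close> by simp
  qed
  have "\<not> p^x*q^y*r^z dvd p^0*q^0*r^0"
  proof
    assume "p^x*q^y*r^z dvd p^0*q^0*r^0"
    hence "x \<le> 0 \<and> y \<le> 0 \<and> z \<le> 0" by (simp only: exps[OF pr])
    thus False using assms(5) by simp
  qed
  hence "p^x*q^y*r^z \<noteq> 1" by auto
  thus "int (p^x*q^y*r^z) > 1" using Dpos[of x y z] by linarith
qed

lemma adj:
  assumes "x \<le> a" "y \<le> b" "z \<le> c" "\<not> (a \<le> x \<and> b \<le> y \<and> c \<le> z)"
    "x' \<le> a" "y' \<le> b" "z' \<le> c" "\<not> (a \<le> x' \<and> b \<le> y' \<and> c \<le> z')"
  shows "AG_adj (residue_ring (int n)) (Jd (int n) (int (p^x*q^y*r^z))) (Jd (int n) (int (p^x'*q^y'*r^z')))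
    \<longleftrightarrow> Jd (int n) (int (p^x*q^y*r^z)) \<noteq> Jd (int n) (int (p^x'*q^y'*r^z'))
        \<and> (a \<le> x + x' \<and> b \<le> y + y' \<and> c \<le> z + z')"
proof -
  have d1: "p^x*q^y*r^z dvd n" "p^x'*q^y'*r^z' dvd n" unfolding nd by (subst exps[OF pr]; use assms in simp)+
  have d2: "\<not> n dvd p^x*q^y*r^z" "\<not> n dvd p^x'*q^y'*r^z'" unfolding nd by (subst exps[OF pr]; use assms in simp)+
  have "ideal_prod (residue_ring (int n)) (Jd (int n) (int (p^x*q^y*r^z))) (Jd (int n) (int (p^x'*q^y'*r^z'))) = {0}
     \<longleftrightarrow> int n dvd int (p^x*q^y*r^z) * int (p^x'*q^y'*r^z')"
    apply (rule Jd_prod[OF n_gt1])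
    using d1 d2 Dpos[of x y z] Dpos[of x' y' z'] by (auto simp del: of_nat_mult)
  also have "\<dots> \<longleftrightarrow> n dvd (p^x*q^y*r^z) * (p^x'*q^y'*r^z')"
    by (metis of_nat_dvd_iff of_nat_mult)
  also have "\<dots> \<longleftrightarrow> (a \<le> x + x' \<and> b \<le> y + y' \<and> c \<le> z + z')"
    unfolding prod3 nd by (rule exps[OF pr])
  finally show ?thesis unfolding AG_adj_def residue_ring_def by simp
qed

lemma jeq:
  assumes "x \<le> a" "y \<le> b" "z \<le> c" "\<not> (a \<le> x \<and> b \<le> y \<and> c \<le> z)"
    "Jd (int n) (int (p^x*q^y*r^z)) = Jd (int n) (int (p^x'*q^y'*r^z'))"
  shows "x' \<le> x \<and> y' \<le> y \<and> z' \<le> z"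
proof -
  have d1: "p^x*q^y*r^z dvd n" unfolding nd by (subst exps[OF pr]; use assms in simp)+
  have d2: "\<not> n dvd p^x*q^y*r^z" unfolding nd by (subst exps[OF pr]; use assms in simp)+
  have "int (p^x'*q^y'*r^z') dvd int (p^x*q^y*r^z)"
    apply (rule Jd_eq[OF n_gt1 _ _ _ assms(5)])
    using d1 d2 Dpos[of x y z] by (auto simp del: of_nat_mult)
  hence "p^x'*q^y'*r^z' dvd p^x*q^y*r^z" by (metis of_nat_dvd_iff)
  thus ?thesis by (simp only: exps[OF pr])
qed



lemma neq:
  assumes "x \<le> a" "y \<le> b" "z \<le> c" "\<not> (a \<le> x \<and> b \<le> y \<and> c \<le> z)"
    "x' \<le> a" "y' \<le> b" "z' \<le> c" "\<not> (a \<le> x' \<and> b \<le> y' \<and> c \<le> z')"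
    "\<not> (x' \<le> x \<and> y' \<le> y \<and> z' \<le> z) \<or> \<not> (x \<le> x' \<and> y \<le> y' \<and> z \<le> z')"
  shows "Jd (int n) (int (p^x*q^y*r^z)) \<noteq> Jd (int n) (int (p^x'*q^y'*r^z'))"
proof
  assume h: "Jd (int n) (int (p^x*q^y*r^z)) = Jd (int n) (int (p^x'*q^y'*r^z'))"
  have "x' \<le> x \<and> y' \<le> y \<and> z' \<le> z" using jeq[OF assms(1-4) h] .
  moreover have "x \<le> x' \<and> y \<le> y' \<and> z \<le> z'" using jeq[OF assms(5-8) h[symmetric]] .
  ultimately show False using assms(9) by blast
qed

lemma adjI:
  assumes "x \<le> a" "y \<le> b" "z \<le> c" "\<not> (a \<le> x \<and> b \<le> y \<and> c \<le> z)"
    "x' \<le> a" "y' \<le> b" "z' \<le> c" "\<not> (a \<le> x' \<and> b \<le> y' \<and> c \<le> z')"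
    "\<not> (x' \<le> x \<and> y' \<le> y \<and> z' \<le> z) \<or> \<not> (x \<le> x' \<and> y \<le> y' \<and> z \<le> z')"
    "a \<le> x + x' \<and> b \<le> y + y' \<and> c \<le> z + z'"
  shows "AG_adj (residue_ring (int n)) (Jd (int n) (int (p^x*q^y*r^z))) (Jd (int n) (int (p^x'*q^y'*r^z')))"
  using adj[OF assms(1-8)] neq[OF assms(1-9)] assms(10) by blast

lemma nadjI:
  assumes "x \<le> a" "y \<le> b" "z \<le> c" "\<not> (a \<le> x \<and> b \<le> y \<and> c \<le> z)"
    "x' \<le> a" "y' \<le> b" "z' \<le> c" "\<not> (a \<le> x' \<and> b \<le> y' \<and> c \<le> z')"
    "\<not> (a \<le> x + x' \<and> b \<le> y + y' \<and> c \<le> z + z')"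
  shows "\<not> AG_adj (residue_ring (int n)) (Jd (int n) (int (p^x*q^y*r^z))) (Jd (int n) (int (p^x'*q^y'*r^z')))"
  using adj[OF assms(1-8)] assms(9) by blast

end

lemma main_case:
  fixes p q r a b c n :: nat
  assumes pr: "prime p" "prime q" "prime r" "p \<noteq> q" "p \<noteq> r" "q \<noteq> r"
    and e2: "a \<ge> 2" "b \<ge> 2" "c \<ge> 1"
    and nd: "n = p^a*q^b*r^c"
  shows "\<not> perfect_graph (AG_vertices (residue_ring (int n))) (AG_adj (residue_ring (int n)))"
proof -
  have ex: "a \<ge> 1" "b \<ge> 1" "c \<ge> 1" using e2 by auto
  define v1 where "v1 = Jd (int n) (int (p^0*q^b*r^c))"
  define v2 where "v2 = Jd (int n) (int (p^a*q^0*r^c))"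
  define v3 where "v3 = Jd (int n) (int (p^1*q^b*r^0))"
  define v4 where "v4 = Jd (int n) (int (p^(a-1)*q^1*r^c))"
  define v5 where "v5 = Jd (int n) (int (p^a*q^(b-1)*r^0))"
  have V1: "v1 \<in> AG_vertices (residue_ring (int n))" unfolding v1_def by (rule vert[OF pr ex nd]) (use e2 in simp_all)
  have V2: "v2 \<in> AG_vertices (residue_ring (int n))" unfolding v2_def by (rule vert[OF pr ex nd]) (use e2 in simp_all)
  have V3: "v3 \<in> AG_vertices (residue_ring (int n))" unfolding v3_def by (rule vert[OF pr ex nd]) (use e2 in simp_all)
  have V4: "v4 \<in> AG_vertices (residue_ring (int n))" unfolding v4_def by (rule vert[OF pr ex nd]) (use e2 in simp_all)
  have V5: "v5 \<in> AG_vertices (residue_ring (int n))" unfolding v5_def by (rule vert[OF pr ex nd]) (use e2 in simp_all)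
  have N12: "v1 \<noteq> v2" unfolding v1_def v2_def by (rule neq[OF pr ex nd]) (use e2 in simp_all)
  have N13: "v1 \<noteq> v3" unfolding v1_def v3_def by (rule neq[OF pr ex nd]) (use e2 in simp_all)
  have N14: "v1 \<noteq> v4" unfolding v1_def v4_def by (rule neq[OF pr ex nd]) (use e2 in simp_all)
  have N15: "v1 \<noteq> v5" unfolding v1_def v5_def by (rule neq[OF pr ex nd]) (use e2 in simp_all)
  have N23: "v2 \<noteq> v3" unfolding v2_def v3_def by (rule neq[OF pr ex nd]) (use e2 in simp_all)
  have N24: "v2 \<noteq> v4" unfolding v2_def v4_def by (rule neq[OF pr ex nd]) (use e2 in simp_all)
  have N25: "v2 \<noteq> v5" unfolding v2_def v5_def by (rule neq[OF pr ex nd]) (use e2 in simp_all)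
  have N34: "v3 \<noteq> v4" unfolding v3_def v4_def by (rule neq[OF pr ex nd]) (use e2 in simp_all)
  have N35: "v3 \<noteq> v5" unfolding v3_def v5_def by (rule neq[OF pr ex nd]) (use e2 in simp_all)
  have N45: "v4 \<noteq> v5" unfolding v4_def v5_def by (rule neq[OF pr ex nd]) (use e2 in simp_all)
  have E12: "AG_adj (residue_ring (int n)) v1 v2" unfolding v1_def v2_def by (rule adjI[OF pr ex nd]) (use e2 in simp_all)
  have E23: "AG_adj (residue_ring (int n)) v2 v3" unfolding v2_def v3_def by (rule adjI[OF pr ex nd]) (use e2 in simp_all)
  have E34: "AG_adj (residue_ring (int n)) v3 v4" unfolding v3_def v4_def by (rule adjI[OF pr ex nd]) (use e2 in simp_all)
  have E45: "AG_adj (residue_ring (int n)) v4 v5" unfolding v4_def v5_def by (rule adjI[OF pr ex nd]) (use e2 in simp_all)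
  have E51: "AG_adj (residue_ring (int n)) v5 v1" unfolding v5_def v1_def by (rule adjI[OF pr ex nd]) (use e2 in simp_all)
  have F13: "\<not> AG_adj (residue_ring (int n)) v1 v3" unfolding v1_def v3_def by (rule nadjI[OF pr ex nd]) (use e2 in simp_all)
  have F14: "\<not> AG_adj (residue_ring (int n)) v1 v4" unfolding v1_def v4_def by (rule nadjI[OF pr ex nd]) (use e2 in simp_all)
  have F24: "\<not> AG_adj (residue_ring (int n)) v2 v4" unfolding v2_def v4_def by (rule nadjI[OF pr ex nd]) (use e2 in simp_all)
  have F25: "\<not> AG_adj (residue_ring (int n)) v2 v5" unfolding v2_def v5_def by (rule nadjI[OF pr ex nd]) (use e2 in simp_all)
  have F35: "\<not> AG_adj (residue_ring (int n)) v3 v5" unfolding v3_def v5_def by (rule nadjI[OF pr ex nd]) (use e2 in simp_all)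
  have F31: "\<not> AG_adj (residue_ring (int n)) v3 v1" unfolding v3_def v1_def by (rule nadjI[OF pr ex nd]) (use e2 in simp_all)
  have F41: "\<not> AG_adj (residue_ring (int n)) v4 v1" unfolding v4_def v1_def by (rule nadjI[OF pr ex nd]) (use e2 in simp_all)
  have F42: "\<not> AG_adj (residue_ring (int n)) v4 v2" unfolding v4_def v2_def by (rule nadjI[OF pr ex nd]) (use e2 in simp_all)
  have F52: "\<not> AG_adj (residue_ring (int n)) v5 v2" unfolding v5_def v2_def by (rule nadjI[OF pr ex nd]) (use e2 in simp_all)
  have F53: "\<not> AG_adj (residue_ring (int n)) v5 v3" unfolding v5_def v3_def by (rule nadjI[OF pr ex nd]) (use e2 in simp_all)
  show ?thesis
    by (rule C5_not_perfect[of v1 v2 v3 v4 v5]) (use V1 V2 V3 V4 V5 N12 N13 N14 N15 N23 N24 N25 N34 N35 N45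
       E12 E23 E34 E45 E51 F13 F14 F24 F25 F35 F31 F41 F42 F52 F53 in auto)
qed

theorem lemma3:
  fixes p1 p2 p3 a1 a2 a3 n :: nat
  assumes "prime p1" "prime p2" "prime p3"
    and "p1 \<noteq> p2" "p1 \<noteq> p3" "p2 \<noteq> p3"
    and "a1 \<ge> 1" "a2 \<ge> 1" "a3 \<ge> 1"
    and "(a1 > 1 \<and> a2 > 1) \<or> (a1 > 1 \<and> a3 > 1) \<or> (a2 > 1 \<and> a3 > 1)"
    and "n = p1 ^ a1 * p2 ^ a2 * p3 ^ a3"
  shows "\<not> perfect_graph (AG_vertices (residue_ring (int n))) (AG_adj (residue_ring (int n)))"
proof -
  consider "a1 > 1 \<and> a2 > 1" | "a1 > 1 \<and> a3 > 1" | "a2 > 1 \<and> a3 > 1" using assms(10) by blast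
  then show ?thesis
  proof cases
    case 1
    show ?thesis by (rule main_case[of p1 p2 p3 a1 a2 a3]) (use assms 1 in auto)
  next
    case 2
    have "n = p1^a1*p3^a3*p2^a2" using assms(11) by (simp add: ac_simps)
    show ?thesis by (rule main_case[of p1 p3 p2 a1 a3 a2]) (use assms 2 \<open>n = p1^a1*p3^a3*p2^a2\<close> in auto)
  next
    case 3
    have "n = p2^a2*p3^a3*p1^a1" using assms(11) by (simp add: ac_simps)
    show ?thesis by (rule main_case[of p2 p3 p1 a2 a3 a1]) (use assms 3 \<open>n = p2^a2*p3^a3*p1^a1\<close> in auto)
  qed
qed

end
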